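(* Under the standing setup below, assume $h\in(0,d_{min})$. If $g$ is a continuous bounded function on $\mathcal L(t)$ such that $Q_hg=g$, where $Q_hg(x)=\int_{\mathcal L(t)}q_h(x,y)g(y)\,\mu^t(dy)$, then $g$ is constant on each connected component $\mathcal C_1,\dots,\mathcal C_\ell$ of $\mathcal L(t)$.
   Context: Standing setup. Let $X_1$ be a random vector in $\mathbb R^d$ with law $\mu$ having a Lebesgue density $f$. For $s\in\mathbb R$ let $\mathcal L(s)=\{x\in\mathbb R^d: f(x)\ge s\}$. A level $t>0$ in the interior of the range of $f$ is fixed; $\mathcal L(t)$ is nonempty and compact, with finitely many connected components $\mathcal C_1,\dots,\mathcal C_\ell$, and $d_{min}=\min_{i\neq j}\mathrm{dist}(\mathcal C_i,\mathcal C_j)$. Assumption 1: (i) $f$ is of class $C^2$ on $\mathbb R^d$; (ii) $\|D_xf\|>0$ on $\{x: f(x)=t\}$; (iii) $f$, $D_xf$, $D_x^2f$ are uniformly bounded on $\mathbb R^d$. $B$ denotes the unit ball of $\mathbb R^d$ centered at $0$. Assumption 2: $k:\mathbb R^d\to\mathbb R_+$ satisfies (i) $k$ is $C^2$; (ii) the support of $k$ is $B$; (iii) $k$ is bounded from below on $B/2$ by a positive number; (iv) $k(-x)=k(x)$. For $h>0$, $k_h(u)=k(u/h)$. $\mu^t$ is the conditional law of $X_1$ given $X_1\in\mathcal L(t)$; $K_h(x)=\int_{\mathcal L(t)}k_h(y-x)\,\mu^t(dy)$; $q_h(x,y)=k_h(y-x)/K_h(x)$. *)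

theory Defs
  imports "HOL-Probability.Probability"
begin

definition level_set :: "('a \<Rightarrow> real) \<Rightarrow> real \<Rightarrow> 'a set" where
  "level_set f s = {x. f x \<ge> s}"

definition law_of_density :: "('a::euclidean_space \<Rightarrow> real) \<Rightarrow> 'a measure" where
  "law_of_density f = density lborel (\<lambda>x. ennreal (f x))"

text \<open>mu^t: conditional law of X_1 given X_1 in L(t).\<close>
definition mu_t :: "('a::euclidean_space \<Rightarrow> real) \<Rightarrow> real \<Rightarrow> 'a measure" where
  "mu_t f t = uniform_measure (law_of_density f) (level_set f t)"

definition k_h :: "('a::real_normed_vector \<Rightarrow> real) \<Rightarrow> real \<Rightarrow> 'a \<Rightarrow> real" where
  "k_h k h u = k ((1 / h) *\<^sub>R u)"

definition K_h :: "('a::euclidean_space \<Rightarrow> real) \<Rightarrow> real \<Rightarrow> ('a \<Rightarrow> real) \<Rightarrow> real \<Rightarrow> 'a \<Rightarrow> real" where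
  "K_h f t k h x = (LINT y:level_set f t|mu_t f t. k_h k h (y - x))"

definition q_h :: "('a::euclidean_space \<Rightarrow> real) \<Rightarrow> real \<Rightarrow> ('a \<Rightarrow> real) \<Rightarrow> real \<Rightarrow> 'a \<Rightarrow> 'a \<Rightarrow> real" where
  "q_h f t k h x y = k_h k h (y - x) / K_h f t k h x"

definition Q_h :: "('a::euclidean_space \<Rightarrow> real) \<Rightarrow> real \<Rightarrow> ('a \<Rightarrow> real) \<Rightarrow> real \<Rightarrow> ('a \<Rightarrow> real) \<Rightarrow> 'a \<Rightarrow> real" where
  "Q_h f t k h g x = (LINT y:level_set f t|mu_t f t. q_h f t k h x y * g y)"

definition C2_with :: "('a::euclidean_space \<Rightarrow> real) \<Rightarrow> ('a \<Rightarrow> 'a \<Rightarrow>\<^sub>L real)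
     \<Rightarrow> ('a \<Rightarrow> 'a \<Rightarrow>\<^sub>L 'a \<Rightarrow>\<^sub>L real) \<Rightarrow> bool" where
  "C2_with f Df D2f \<longleftrightarrow>
     (\<forall>x. (f has_derivative blinfun_apply (Df x)) (at x)) \<and>
     (\<forall>x. (Df has_derivative blinfun_apply (D2f x)) (at x)) \<and>
     continuous_on UNIV D2f"

definition C2 :: "('a::euclidean_space \<Rightarrow> real) \<Rightarrow> bool" where
  "C2 f \<longleftrightarrow> (\<exists>Df D2f. C2_with f Df D2f)"

end

theory Submission
  imports Defs
begin

lemma approx_above:
  fixes f :: "'a::euclidean_space \<Rightarrow> real"
  assumes der: "(f has_derivative blinfun_apply D) (at y)" and D: "D \<noteq> 0"
    and e: "e > 0"
  shows "\<exists>z. dist z y < e \<and> f z > f y"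
proof -
  obtain v where v: "blinfun_apply D v \<noteq> 0" using D by (metis blinfun_eqI zero_blinfun.rep_eq)
  define w where "w = (if blinfun_apply D v > 0 then v else - v)"
  have w: "blinfun_apply D w > 0" using v by (auto simp: w_def blinfun.minus_right)
  have "((\<lambda>s. y + s *\<^sub>R w) has_derivative (\<lambda>s. s *\<^sub>R w)) (at 0)"
    by (auto intro!: derivative_eq_intros)
  moreover have "(f has_derivative blinfun_apply D) (at ((\<lambda>s. y + s *\<^sub>R w) 0))"
    using der by simp
  ultimately have "((\<lambda>s. f (y + s *\<^sub>R w)) has_derivative (\<lambda>s. blinfun_apply D (s *\<^sub>R w))) (at 0)"
    using has_derivative_compose[of "\<lambda>s. y + s *\<^sub>R w" _ 0 UNIV f] by (simp add: o_def)
  then have "((\<lambda>s. f (y + s *\<^sub>R w)) has_real_derivative blinfun_apply D w) (at 0)"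
    by (simp add: has_field_derivative_def blinfun.scaleR_right mult.commute[of _ "blinfun_apply D w"])
  then obtain d where d: "d > 0" "\<And>s. s > 0 \<Longrightarrow> s < d \<Longrightarrow> f (y + 0 *\<^sub>R w) < f (y + (0 + s) *\<^sub>R w)"
    using DERIV_pos_inc_right[OF _ w] by blast
  have wn: "norm w > 0" using w by auto
  define s where "s = min (d/2) (e / (2 * norm w))"
  have s: "s > 0" "s < d" using d e wn by (auto simp: s_def)
  have "s * norm w \<le> e / (2 * norm w) * norm w" using wn by (intro mult_right_mono) (auto simp: s_def)
  also have "\<dots> < e" using wn e by (simp add: field_simps)
  finally have "dist (y + s *\<^sub>R w) y < e" using s by (simp add: dist_norm)
  moreover have "f (y + s *\<^sub>R w) > f y" using d(2)[OF s] by simp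
  ultimately show ?thesis by blast
qed

lemma pos_mu:
  fixes f :: "'a::euclidean_space \<Rightarrow> real"
  assumes fc: "continuous_on UNIV f" and t: "t > 0"
    and V: "open V" "V \<noteq> {}" "V \<subseteq> {x. t < f x}"
  shows "emeasure (law_of_density f) V > 0"
proof -
  have [measurable]: "f \<in> borel_measurable borel" using fc by (rule borel_measurable_continuous_onI)
  have Vs[measurable]: "V \<in> sets borel" using V(1) by auto
  obtain z where z: "z \<in> V" using V(2) by auto
  obtain r where r: "r > 0" "ball z r \<subseteq> V" using V(1) z open_contains_ball by blast
  have "0 < measure lborel (ball z r)" using r(1) by (rule content_ball_pos)
  then have "emeasure lborel (ball z r) \<noteq> 0" by (auto simp: measure_def)
  then have "0 < emeasure lborel (ball z r)" by (simp add: zero_less_iff_neq_zero)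
  also have "\<dots> \<le> emeasure lborel V" using r by (intro emeasure_mono) auto
  finally have lV: "0 < emeasure lborel V" .
  have "ennreal t * emeasure lborel V = (\<integral>\<^sup>+ x. ennreal t * indicator V x \<partial>lborel)"
    by (simp add: nn_integral_cmult_indicator)
  also have "\<dots> \<le> (\<integral>\<^sup>+ x. ennreal (f x) * indicator V x \<partial>lborel)"
    using V(3) by (intro nn_integral_mono) (auto simp: indicator_def intro!: ennreal_leI)
  also have "\<dots> = emeasure (law_of_density f) V"
    unfolding law_of_density_def by (subst emeasure_density) auto
  finally have le: "ennreal t * emeasure lborel V \<le> emeasure (law_of_density f) V" .
  have "0 < ennreal t * emeasure lborel V" using lV t by (simp add: ennreal_zero_less_mult_iff)
  then show ?thesis using le by (rule less_le_trans)
qed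

theorem propositionC2:
  fixes f :: "'a::euclidean_space \<Rightarrow> real"
    and Df :: "'a \<Rightarrow> 'a \<Rightarrow>\<^sub>L real"
    and D2f :: "'a \<Rightarrow> 'a \<Rightarrow>\<^sub>L 'a \<Rightarrow>\<^sub>L real"
    and k :: "'a \<Rightarrow> real"
    and t h :: real
    and g :: "'a \<Rightarrow> real"
  assumes f_nonneg: "\<And>x. f x \<ge> 0"
    and f_prob: "prob_space (law_of_density f)"
    and t_pos: "t > 0"
    and t_int: "t \<in> interior (range f)"
    and L_ne: "level_set f t \<noteq> {}"
    and L_compact: "compact (level_set f t)"
    and L_fin: "finite (components (level_set f t))"
    \<comment> \<open>Assumption 1\<close>
    and f_C2: "C2_with f Df D2f"
    and grad_nz: "\<And>x. f x = t \<Longrightarrow> Df x \<noteq> 0"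
    and f_bdd: "bounded (range f)"
    and Df_bdd: "bounded (range Df)"
    and D2f_bdd: "bounded (range D2f)"
    \<comment> \<open>Assumption 2\<close>
    and k_nonneg: "\<And>x. k x \<ge> 0"
    and k_C2: "C2 k"
    and k_supp: "closure {x. k x \<noteq> 0} = cball 0 1"
    and k_lower: "\<exists>c>0. \<forall>x\<in>cball 0 (1/2). k x \<ge> c"
    and k_sym: "\<And>x. k (- x) = k x"
    \<comment> \<open>0 < h < d_min\<close>
    and h_pos: "h > 0"
    and h_dmin: "\<And>C C'. C \<in> components (level_set f t) \<Longrightarrow> C' \<in> components (level_set f t)
                   \<Longrightarrow> C \<noteq> C' \<Longrightarrow> h < setdist C C'"
    \<comment> \<open>g continuous, bounded on L(t), with Q_h g = g\<close>
    and g_cont: "continuous_on (level_set f t) g"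
    and g_bdd: "bounded (g ` level_set f t)"
    and g_fix: "\<And>x. x \<in> level_set f t \<Longrightarrow> Q_h f t k h g x = g x"
  shows "\<forall>C \<in> components (level_set f t). \<exists>c. \<forall>x\<in>C. g x = c"
proof -
  define L where "L = level_set f t"
  define N where "N = mu_t f t"
  define \<mu> where "\<mu> = law_of_density f"
  have fder: "\<And>x. (f has_derivative blinfun_apply (Df x)) (at x)" using f_C2 by (simp add: C2_with_def)
  have fc: "continuous_on UNIV f"
    using fder has_derivative_continuous by (blast intro: continuous_at_imp_continuous_on)
  have [measurable]: "f \<in> borel_measurable borel" using fc by (rule borel_measurable_continuous_onI)
  have L_def': "L = {x. t \<le> f x}" by (simp add: L_def level_set_def)
  have Lcl: "closed L" using L_compact by (simp add: L_def compact_imp_closed)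
  have Ls[measurable]: "L \<in> sets borel" using Lcl by auto
  have opn: "open {x. t < f x}" using fc by (simp add: open_Collect_less continuous_on_const)
  have dense: "\<exists>z. dist z y < e \<and> t < f z" if "y \<in> L" "e > 0" for y e
  proof (cases "f y = t")
    case True
    then show ?thesis using approx_above[OF fder grad_nz[OF True] \<open>e>0\<close>] by auto
  next
    case False
    then show ?thesis using that by (intro exI[of _ y]) (auto simp: L_def')
  qed
  have posmu: "emeasure \<mu> V > 0" if "open V" "V \<noteq> {}" "V \<subseteq> {x. t < f x}" for V
    unfolding \<mu>_def using pos_mu[OF fc t_pos that] .
  obtain x2 where x2: "f x2 > t"
  proof -
    obtain e where e: "e > 0" "ball t e \<subseteq> range f" using t_int by (meson mem_interior)
    have "t + e/2 \<in> ball t e" using e by (simp add: dist_real_def)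
    then obtain x where "f x = t + e/2" using e by auto
    then show ?thesis using e that by (intro that[of x]) auto
  qed
  have "emeasure \<mu> {x. t < f x} > 0" using posmu[OF opn] x2 by auto
  also have "\<dots> \<le> emeasure \<mu> L" unfolding \<mu>_def law_of_density_def
    by (intro emeasure_mono) (auto simp: L_def')
  finally have muL0: "emeasure \<mu> L \<noteq> 0" by auto
  have muLinf: "emeasure \<mu> L \<noteq> \<infinity>"
    using prob_space.emeasure_space_1[OF f_prob] emeasure_space[of \<mu> L]
    unfolding \<mu>_def[symmetric] using ennreal_one_neq_top neq_top_trans infinity_ennreal_def by metis
  have Nprob: "prob_space N" unfolding N_def mu_t_def
    using prob_space_uniform_measure[OF muL0 muLinf] by (simp add: \<mu>_def L_def)
  then interpret N: prob_space N .
  have sN: "sets N = sets borel" by (simp add: N_def mu_t_def law_of_density_def)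
  have spN: "space N = UNIV" using sets_eq_imp_space_eq[OF sN] by simp
  have measN: "measurable N borel = measurable borel borel" by (rule measurable_cong_sets[OF sN refl])
  have posN: "emeasure N V > 0" if "open V" "V \<noteq> {}" "V \<subseteq> {x. t < f x}" for V
  proof -
    have Vs: "V \<in> sets \<mu>" using that(1) by (simp add: \<mu>_def law_of_density_def)
    have Ls': "L \<in> sets \<mu>" by (simp add: \<mu>_def law_of_density_def)
    have "L \<inter> V = V" using that(3) by (auto simp: L_def')
    then have "emeasure N V = emeasure \<mu> V / emeasure \<mu> L"
      using emeasure_uniform_measure[OF Ls' Vs] by (simp add: N_def mu_t_def \<mu>_def L_def)
    then show ?thesis using posmu[OF that] muLinf
      by (simp add: zero_less_iff_neq_zero)
  qed
  have nullc: False if ae: "AE y in N. P y" and V: "open V" "V \<noteq> {}" "V \<subseteq> {x. t < f x}"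
    and nP: "\<And>y. y \<in> V \<Longrightarrow> \<not> P y" for P V
  proof -
    have "AE y in N. y \<notin> V" using ae nP by (auto elim!: AE_mp)
    moreover have "V \<in> sets N" using V(1) sN by auto
    ultimately have "emeasure N V = 0"
      by (subst (asm) AE_iff_measurable[of V]) (auto simp: spN)
    then show False using posN[OF V] by simp
  qed
  obtain Dk D2k where kC: "C2_with k Dk D2k" using k_C2 by (auto simp: C2_def)
  have kc: "continuous_on UNIV k" using kC unfolding C2_with_def
    using has_derivative_continuous by (blast intro: continuous_at_imp_continuous_on)
  have [measurable]: "k \<in> borel_measurable borel" using kc by (rule borel_measurable_continuous_onI)
  have kzero: "k x = 0" if "norm x > 1" for x
  proof (rule ccontr)
    assume "k x \<noteq> 0"
    then have "x \<in> {x. k x \<noteq> 0}" by simp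
    then have "x \<in> closure {x. k x \<noteq> 0}" using closure_subset[of "{x. k x \<noteq> 0}"] by (rule subsetD[rotated])
    then have "x \<in> cball 0 1" unfolding k_supp .
    then show False using that by simp
  qed
  obtain a where a: "\<And>x. x \<in> cball 0 1 \<Longrightarrow> norm (k x) \<le> a"
    using compact_imp_bounded[OF compact_continuous_image[OF continuous_on_subset[OF kc] compact_cball]]
    unfolding bounded_iff by blast
  define Bk where "Bk = a"
  have Bk: "\<bar>k x\<bar> \<le> Bk" for x
  proof (cases "norm x > 1")
    case True
    then show ?thesis using a[of 0] by (simp add: kzero Bk_def)
  next
    case False
    then show ?thesis using a[of x] by (simp add: Bk_def)
  qed
  have Bk0: "0 \<le> Bk" using Bk[of 0] by simp
  obtain c where c: "c > 0" "\<And>x. x \<in> cball 0 (1/2) \<Longrightarrow> c \<le> k x" using k_lower by blast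
  obtain Bg where Bg: "\<And>y. y \<in> L \<Longrightarrow> \<bar>g y\<bar> \<le> Bg"
    using g_bdd unfolding bounded_iff L_def by auto
  obtain xL where xL: "xL \<in> L" using L_ne L_def by auto
  have Bg0: "0 \<le> Bg" using Bg[OF xL] by simp
  have gc: "continuous_on L g" using g_cont by (simp add: L_def)
  define G where "G y = indicator L y *\<^sub>R g y" for y
  have [measurable]: "G \<in> borel_measurable borel"
    unfolding G_def[abs_def] by (rule borel_measurable_continuous_on_indicator[OF Ls gc])
  have key: "g y = g x1" if C: "C \<in> components L" and x1: "x1 \<in> C" and mx: "\<forall>z\<in>C. g z \<le> g x1"
    and y: "y \<in> L" "dist y x1 < h/2" for C x1 y
  proof -
    define M where "M = g x1"
    have x1L: "x1 \<in> L" using x1 C in_components_subset by blast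
    define \<phi> where "\<phi> y = k ((1/h) *\<^sub>R (y - x1))" for y
    have [measurable]: "\<phi> \<in> borel_measurable borel" unfolding \<phi>_def[abs_def] by measurable
    have \<phi>nn: "\<phi> z \<ge> 0" for z by (simp add: \<phi>_def k_nonneg)
    have \<phi>B: "\<bar>\<phi> z\<bar> \<le> Bk" for z by (simp add: \<phi>_def Bk)
    have nrm: "norm ((1/h) *\<^sub>R (z - x1)) = dist z x1 / h" for z
      using h_pos by (simp add: dist_norm)
    have \<phi>supp: "dist z x1 \<le> h" if "\<phi> z \<noteq> 0" for z
    proof (rule ccontr)
      assume a: "\<not> dist z x1 \<le> h"
      have "norm ((1/h) *\<^sub>R (z - x1)) > 1" unfolding nrm using h_pos a by (simp add: field_simps)
      then show False using that kzero by (simp add: \<phi>_def)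
    qed
    have \<phi>low: "\<phi> z \<ge> c" if "dist z x1 \<le> h/2" for z
    proof -
      have "norm ((1/h) *\<^sub>R (z - x1)) \<le> 1/2" unfolding nrm using h_pos that by (simp add: field_simps)
      then show ?thesis using c(2) by (simp add: \<phi>_def)
    qed
    have inC: "z \<in> C" if "z \<in> L" "dist z x1 \<le> h" for z
    proof (rule ccontr)
      assume nz: "z \<notin> C"
      define C' where "C' = connected_component_set L z"
      have C': "C' \<in> components L" "z \<in> C'" using that(1) by (auto simp: C'_def componentsI)
      then have "C \<noteq> C'" using nz by auto
      then have "h < setdist C C'" using h_dmin C C' by (simp add: L_def)
      moreover have "setdist C C' \<le> dist x1 z" using setdist_le_dist[OF x1 C'(2)] .
      ultimately show False using that(2) by (simp add: dist_commute)
    qed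
    have I1: "integrable N (\<lambda>z. indicator L z * \<phi> z)"
      by (rule N.integrable_const_bound[where B=Bk]) (auto simp: measN \<phi>B indicator_def Bk0)
    have I2: "integrable N (\<lambda>z. \<phi> z * G z)"
    proof (rule N.integrable_const_bound[where B="Bk * Bg"])
      show "AE z in N. norm (\<phi> z * G z) \<le> Bk * Bg"
      proof (intro AE_I2)
        fix z show "norm (\<phi> z * G z) \<le> Bk * Bg"
          using Bg[of z] \<phi>B[of z] Bk0 Bg0 by (auto simp: G_def indicator_def abs_mult intro: mult_mono)
      qed
    qed (simp add: measN)
    define K where "K = K_h f t k h x1"
    have Kdef: "K = (\<integral>z. indicator L z * \<phi> z \<partial>N)"
      unfolding K_def K_h_def set_lebesgue_integral_def k_h_def
      by (simp add: L_def N_def \<phi>_def)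
    have Qdef: "Q_h f t k h g x1 = (\<integral>z. (\<phi> z * G z) / K \<partial>N)"
      unfolding Q_h_def q_h_def set_lebesgue_integral_def K_def[symmetric]
      by (intro Bochner_Integration.integral_cong)
         (auto simp: G_def \<phi>_def k_h_def L_def N_def indicator_def)
    have K0: "K \<ge> 0" unfolding Kdef by (intro Bochner_Integration.integral_nonneg) (auto simp: \<phi>nn)
    have Kpos: "K > 0"
    proof (rule ccontr)
      assume "\<not> K > 0"
      then have "K = 0" using K0 by simp
      then have ae: "AE z in N. indicator L z * \<phi> z = 0"
        using integral_nonneg_eq_0_iff_AE[OF I1] Kdef by (simp add: \<phi>nn)
      obtain z0 where z0: "dist z0 x1 < h/2" "t < f z0" using dense[OF x1L, of "h/2"] h_pos by auto
      show False
      proof (rule nullc[OF ae])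
        show "open (ball x1 (h/2) \<inter> {x. t < f x})" using opn by auto
        show "ball x1 (h/2) \<inter> {x. t < f x} \<noteq> {}" using z0 by (auto simp: dist_commute)
        show "ball x1 (h/2) \<inter> {x. t < f x} \<subseteq> {x. t < f x}" by auto
        fix z assume "z \<in> ball x1 (h/2) \<inter> {x. t < f x}"
        then have "z \<in> L" "dist z x1 \<le> h/2" by (auto simp: L_def' dist_commute)
        then show "\<not> indicator L z * \<phi> z = 0" using \<phi>low[of z] c(1) by auto
      qed
    qed
    have "(\<integral>z. \<phi> z * G z \<partial>N) / K = M" using g_fix[of x1] x1L Qdef by (simp add: L_def M_def)
    then have eq: "(\<integral>z. \<phi> z * G z \<partial>N) = M * K" using Kpos by (simp add: field_simps)
    define H where "H z = indicator L z * \<phi> z * M - \<phi> z * G z" for z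
    have IH: "integrable N H" unfolding H_def[abs_def] using I1 I2 by auto
    have "(\<integral>z. H z \<partial>N) = M * K - M * K"
    proof -
      have i3: "integrable N (\<lambda>z. indicator L z * \<phi> z * M)" using I1 by simp
      have "(\<integral>z. H z \<partial>N) = (\<integral>z. indicator L z * \<phi> z * M \<partial>N) - (\<integral>z. \<phi> z * G z \<partial>N)"
        unfolding H_def by (rule Bochner_Integration.integral_diff[OF i3 I2])
      also have "(\<integral>z. indicator L z * \<phi> z * M \<partial>N) = K * M"
        unfolding Kdef by (rule integral_mult_left_zero)
      finally show ?thesis using eq by simp
    qed
    then have H0: "(\<integral>z. H z \<partial>N) = 0" by simp
    have Heq: "H z = indicator L z * (\<phi> z * (M - g z))" for z
      by (simp add: H_def G_def indicator_def algebra_simps)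
    have Hnn: "H z \<ge> 0" for z
    proof (cases "z \<in> L \<and> \<phi> z \<noteq> 0")
      case True
      then have "z \<in> C" using inC \<phi>supp by blast
      then have "g z \<le> M" using mx by (simp add: M_def)
      then show ?thesis using True \<phi>nn[of z] by (simp add: Heq)
    next
      case False
      then show ?thesis by (auto simp: Heq)
    qed
    have aeH: "AE z in N. H z = 0" using integral_nonneg_eq_0_iff_AE[OF IH] H0 Hnn by simp
    have yC: "y \<in> C" using inC[OF y(1)] y(2) h_pos by simp
    then have gyM: "g y \<le> M" using mx by (simp add: M_def)
    show "g y = g x1"
    proof (rule ccontr)
      assume "g y \<noteq> g x1"
      then have lt: "g y < M" using gyM by (simp add: M_def)
      have "\<forall>e>0. \<exists>d>0. \<forall>z\<in>L. dist z y < d \<longrightarrow> dist (g z) (g y) < e"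
        using gc y(1) unfolding continuous_on_iff by blast
      then obtain d where d: "d > 0" "\<And>z. z \<in> L \<Longrightarrow> dist z y < d \<Longrightarrow> dist (g z) (g y) < M - g y"
        using lt by (meson diff_gt_0_iff_gt)
      define r where "r = min d (h/2 - dist y x1)"
      have r: "r > 0" using d y(2) by (simp add: r_def)
      obtain z0 where z0: "dist z0 y < r" "t < f z0" using dense[OF y(1) r] by auto
      show False
      proof (rule nullc[OF aeH])
        show "open (ball y r \<inter> {x. t < f x})" using opn by auto
        show "ball y r \<inter> {x. t < f x} \<noteq> {}" using z0 by (auto simp: dist_commute)
        show "ball y r \<inter> {x. t < f x} \<subseteq> {x. t < f x}" by auto
        fix z assume z: "z \<in> ball y r \<inter> {x. t < f x}"
        then have zL: "z \<in> L" and dzy: "dist z y < r" by (auto simp: L_def' dist_commute)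
        have "dist z x1 \<le> dist z y + dist y x1" by (rule dist_triangle)
        then have "dist z x1 \<le> h/2" using dzy by (simp add: r_def)
        then have "\<phi> z \<ge> c" by (rule \<phi>low)
        moreover have "g z < M" using d(2)[OF zL] dzy by (simp add: r_def dist_real_def)
        ultimately show "\<not> H z = 0" using c(1) zL by (simp add: Heq)
      qed
    qed
  qed
  show ?thesis
  proof
    fix C assume C: "C \<in> components (level_set f t)"
    then have CL: "C \<in> components L" by (simp add: L_def)
    have Csub: "C \<subseteq> L" using CL in_components_subset by blast
    have LC: "compact (L \<inter> C)"
      using compact_Int_closed[OF _ closed_components[OF Lcl CL]] L_compact by (simp add: L_def)
    have Ccomp: "compact C" using LC Int_absorb1[OF Csub] by simp
    obtain x0 where x0: "x0 \<in> C" "\<forall>z\<in>C. g z \<le> g x0"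
      using continuous_attains_sup[OF Ccomp in_components_nonempty[OF CL] continuous_on_subset[OF gc Csub]]
      by blast
    define S where "S = {x \<in> C. g x = g x0}"
    have "openin (top_of_set C) S"
      unfolding openin_euclidean_subtopology_iff
    proof (intro conjI ballI)
      show "S \<subseteq> C" by (auto simp: S_def)
      fix x assume x: "x \<in> S"
      show "\<exists>e>0. \<forall>x'\<in>C. dist x' x < e \<longrightarrow> x' \<in> S"
      proof (intro exI[of _ "h/2"] conjI ballI impI)
        show "h/2 > 0" using h_pos by simp
        fix x' assume "x' \<in> C" "dist x' x < h/2"
        moreover have "g x' = g x"
          using key[OF CL _ _ _ \<open>dist x' x < h/2\<close>] x x0 Csub \<open>x' \<in> C\<close> by (auto simp: S_def)
        ultimately show "x' \<in> S" using x by (auto simp: S_def)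
      qed
    qed
    moreover have "closedin (top_of_set C) S"
      unfolding S_def by (rule continuous_closedin_preimage_constant[OF continuous_on_subset[OF gc Csub]])
    ultimately have "S = {} \<or> S = C"
      using connected_clopen in_components_connected[OF CL] by blast
    then have "S = C" using x0 by (auto simp: S_def)
    then show "\<exists>c. \<forall>x\<in>C. g x = c" by (auto simp: S_def)
  qed
qed

end
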